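(* Let $\mathscr{G}_n$ be a simple, verbose $\upsilon$-reduction grammar, let $\varphi = \lambda(T[\Uparrow(S)])$, and let $t = (\lambda a)[s][s_1]\cdots[s_w]$ be a $\lambda\upsilon$-term ($w\ge 0$). Then $t$ normalises in exactly $n+1$ normal-order $\upsilon$-steps if and only if there exists a unique term $\pi = (\lambda(\alpha[\Uparrow(\sigma)]))[\sigma_1]\cdots[\sigma_w] \in \Delta_\varphi^n$ such that $t \in L\big((\lambda\alpha)[\sigma][\sigma_1]\cdots[\sigma_w]\big)$.
   Context: $\lambda\upsilon$-terms: $t ::= \underline{n} \mid \lambda t \mid t\,t \mid t[s]$; substitutions $s ::= t/ \mid \Uparrow(s) \mid\ \uparrow$; indices $\underline{n} ::= \underline{0} \mid \mathtt{S}\,\underline{n}$. The $\upsilon$-rules: $(a b)[s] \to a[s](b[s])$; $(\lambda a)[s] \to \lambda(a[\Uparrow(s)])$; $\underline{0}[a/] \to a$; $(\mathtt{S}\,\underline{n})[a/] \to \underline{n}$; $\underline{0}[\Uparrow(s)] \to \underline{0}$; $(\mathtt{S}\,\underline{n})[\Uparrow(s)] \to \underline{n}[s][\uparrow]$; $\underline{n}[\uparrow] \to \mathtt{S}\,\underline{n}$. A term normalises in $k$ steps if leftmost-outermost $\upsilon$-reduction reaches a $\upsilon$-normal form in exactly $k$ steps. $\mathscr{F}$ is the ranked alphabet of $\lambda\upsilon$ symbols (application, closure $\cdot[\cdot]$ binary; $\lambda$, $\cdot/$, $\Uparrow$, $\mathtt{S}$ unary; $\uparrow,\underline{0}$ constants);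 $\mathscr{T}_{\mathscr{F}}(X)$ is the set of terms over $\mathscr{F}$ with variables from $X$. In a regular tree grammar with productions $X\to\alpha$, $L(\alpha)$ is the set of ground terms derivable from $\alpha$; a non-terminal is unambiguous if each ground term has at most one derivation from it; a production $X\to\alpha$ is self-referencing if $X$ occurs in $\alpha$, regular otherwise. $\Lambda$ has productions $T \to N \mid \lambda T \mid T T \mid T[S]$, $S \to T/ \mid \Uparrow(S) \mid \uparrow$, $N \to \underline{0} \mid \mathtt{S} N$. A $\upsilon$-reduction grammar $\mathscr{G}_n$ has axiom $G_n$, non-terminals $\mathscr{N}_n=\{T,S,N,G_0,\dots,G_n\}$, contains all productions of $\Lambda$, and each $G_k$ ($0\le k\le n$) is unambiguous with $L(G_k)$ the set of terms normalising in exactly $k$ steps. It is simple if its self-referencing productions are productions of $\Lambda$ or of the form $G_k \to \lambda G_k \mid G_0 G_k \mid G_k G_0$, and each regular production $G_k\to\alpha$ has $\alpha \in \mathscr{T}_{\mathscr{F}}(\{T,S,N,G_0,\dots,G_{k-1}\})$. It is verbose if none of its productions has the form $X \to G_k[\sigma_1]\cdots[\sigma_w]$. A term has closure width $w$ if $w$ is the largest integer with the term of the form $\chi[\sigma_1]\cdots[\sigma_w]$. A finite intersection partition $\Pi(\alpha,\beta)$ of $\alpha,\beta\in\mathscr{T}_{\mathscr{F}}(\mathscr{N}_n)$ is a finite set of terms in $\mathscr{T}_{\mathscr{F}}(\mathscr{N}_n)$ with pairwise disjoint languages whose union of languages is $L(\alpha)\cap L(\beta)$. For a template $\varphi = \chi[\tau_1]\cdots[\tau_d]$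 of closure width $d$ and a production $X \to \gamma$ of $\mathscr{G}_n$ where $\gamma = \gamma'[\sigma_1]\cdots[\sigma_w]$ has closure width $w$, set $\Delta_\varphi(\gamma) = \Pi\big(\gamma,\ \chi[\tau_1]\cdots[\tau_d][S]\cdots[S]\big)$ with $w-d$ copies of $[S]$ appended, and $\Delta_\varphi^n = \bigcup\{\Delta_\varphi(\gamma) : G_n \to \gamma \text{ a production of } \mathscr{G}_n\}$. (Here $\varphi = \lambda(T[\Uparrow(S)])$ has closure width $d=0$.) *)

theory Defs
  imports Main
begin

text \<open>Terms of T_F(X): symbols application, closure (binary), lambda, slash (a/),
  lift, successor (unary), shift and zero (constants), plus variables from X.
  Ground lambda-upsilon terms are the elements of language L(T) of the grammar Lambda.\<close>

datatype 'v lt =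
    Var 'v
  | Zero
  | Sc "'v lt"
  | Lam "'v lt"
  | App "'v lt" "'v lt"
  | Clo "'v lt" "'v lt"
  | Sl "'v lt"
  | Lift "'v lt"
  | Shift

fun nts :: "'v lt \<Rightarrow> 'v set" where
  "nts (Var x) = {x}"
| "nts Zero = {}"
| "nts (Sc a) = nts a"
| "nts (Lam a) = nts a"
| "nts (App a b) = nts a \<union> nts b"
| "nts (Clo a b) = nts a \<union> nts b"
| "nts (Sl a) = nts a"
| "nts (Lift a) = nts a"
| "nts Shift = {}"

definition clos :: "'v lt \<Rightarrow> 'v lt list \<Rightarrow> 'v lt" where
  "clos x ss = foldl Clo x ss"

fun cwidth :: "'v lt \<Rightarrow> nat" where
  "cwidth (Clo x s) = Suc (cwidth x)"
| "cwidth _ = 0"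

datatype nt = NT | NS | NN | NG nat

type_synonym grammar = "(nt \<times> nt lt) set"

definition Lambda :: grammar where
  "Lambda = {(NT, Var NN), (NT, Lam (Var NT)), (NT, App (Var NT) (Var NT)),
             (NT, Clo (Var NT) (Var NS)),
             (NS, Sl (Var NT)), (NS, Lift (Var NS)), (NS, Shift),
             (NN, Zero), (NN, Sc (Var NN))}"

text \<open>Derivation trees: at each nonterminal occurrence the production used is recorded.\<close>
datatype der =
    DVar "nt \<times> nt lt" der
  | DZero
  | DSc der
  | DLam der
  | DApp der der
  | DClo der der
  | DSl der
  | DLift der
  | DShift

inductive is_der :: "grammar \<Rightarrow> nt lt \<Rightarrow> der \<Rightarrow> nt lt \<Rightarrow> bool" for G where
  "(X, \<beta>) \<in> G \<Longrightarrow> is_der G \<beta> d t \<Longrightarrow> is_der G (Var X) (DVar (X, \<beta>) d) t"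
| "is_der G Zero DZero Zero"
| "is_der G a d t \<Longrightarrow> is_der G (Sc a) (DSc d) (Sc t)"
| "is_der G a d t \<Longrightarrow> is_der G (Lam a) (DLam d) (Lam t)"
| "is_der G a d t \<Longrightarrow> is_der G b e u \<Longrightarrow> is_der G (App a b) (DApp d e) (App t u)"
| "is_der G a d t \<Longrightarrow> is_der G b e u \<Longrightarrow> is_der G (Clo a b) (DClo d e) (Clo t u)"
| "is_der G a d t \<Longrightarrow> is_der G (Sl a) (DSl d) (Sl t)"
| "is_der G a d t \<Longrightarrow> is_der G (Lift a) (DLift d) (Lift t)"
| "is_der G Shift DShift Shift"

definition lang :: "grammar \<Rightarrow> nt lt \<Rightarrow> nt lt set" where
  "lang G \<alpha> = {t. \<exists>d. is_der G \<alpha> d t}"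

definition unambiguous :: "grammar \<Rightarrow> nt \<Rightarrow> bool" where
  "unambiguous G X \<longleftrightarrow>
     (\<forall>t d1 d2. is_der G (Var X) d1 t \<longrightarrow> is_der G (Var X) d2 t \<longrightarrow> d1 = d2)"

definition lu_term :: "nt lt \<Rightarrow> bool" where
  "lu_term t \<longleftrightarrow> t \<in> lang Lambda (Var NT)"

fun is_idx :: "'v lt \<Rightarrow> bool" where
  "is_idx Zero = True"
| "is_idx (Sc n) = is_idx n"
| "is_idx _ = False"

fun root_step :: "'v lt \<Rightarrow> 'v lt option" where
  "root_step (Clo (App a b) s) = Some (App (Clo a s) (Clo b s))"
| "root_step (Clo (Lam a) s) = Some (Lam (Clo a (Lift s)))"
| "root_step (Clo Zero (Sl a)) = Some a"
| "root_step (Clo (Sc n) (Sl a)) = (if is_idx n then Some n else None)"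
| "root_step (Clo Zero (Lift s)) = Some Zero"
| "root_step (Clo (Sc n) (Lift s)) = (if is_idx n then Some (Clo (Clo n s) Shift) else None)"
| "root_step (Clo n Shift) = (if is_idx n then Some (Sc n) else None)"
| "root_step _ = None"

fun lo_step :: "'v lt \<Rightarrow> 'v lt option" where
  "lo_step t = (case root_step t of Some t' \<Rightarrow> Some t' | None \<Rightarrow>
     (case t of
        Sc x \<Rightarrow> map_option Sc (lo_step x)
      | Lam x \<Rightarrow> map_option Lam (lo_step x)
      | App x y \<Rightarrow> (case lo_step x of Some x' \<Rightarrow> Some (App x' y)
                     | None \<Rightarrow> map_option (App x) (lo_step y))
      | Clo x y \<Rightarrow> (case lo_step x of Some x' \<Rightarrow> Some (Clo x' y)
                     | None \<Rightarrow> map_option (Clo x) (lo_step y))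
      | Sl x \<Rightarrow> map_option Sl (lo_step x)
      | Lift x \<Rightarrow> map_option Lift (lo_step x)
      | _ \<Rightarrow> None))"

inductive norm_steps :: "'v lt \<Rightarrow> nat \<Rightarrow> bool" where
  "lo_step t = None \<Longrightarrow> norm_steps t 0"
| "lo_step t = Some t' \<Longrightarrow> norm_steps t' k \<Longrightarrow> norm_steps t (Suc k)"

definition Nn :: "nat \<Rightarrow> nt set" where
  "Nn n = {NT, NS, NN} \<union> NG ` {..n}"

definition upsilon_grammar :: "grammar \<Rightarrow> nat \<Rightarrow> bool" where
  "upsilon_grammar G n \<longleftrightarrow>
     finite G \<and> Lambda \<subseteq> G \<and>
     (\<forall>(X, \<alpha>) \<in> G. X \<in> Nn n \<and> nts \<alpha> \<subseteq> Nn n) \<and>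
     (\<forall>(X, \<alpha>) \<in> G. X \<in> {NT, NS, NN} \<longrightarrow> (X, \<alpha>) \<in> Lambda) \<and>
     (\<forall>k \<le> n. unambiguous G (NG k) \<and>
                lang G (Var (NG k)) = {t. lu_term t \<and> norm_steps t k})"

definition simple_grammar :: "grammar \<Rightarrow> bool" where
  "simple_grammar G \<longleftrightarrow>
     (\<forall>(X, \<alpha>) \<in> G. X \<in> nts \<alpha> \<longrightarrow>
        (X, \<alpha>) \<in> Lambda \<or>
        (\<exists>k. X = NG k \<and> \<alpha> \<in> {Lam (Var (NG k)), App (Var (NG 0)) (Var (NG k)),
                                  App (Var (NG k)) (Var (NG 0))})) \<and>
     (\<forall>(X, \<alpha>) \<in> G. \<forall>k. X = NG k \<and> X \<notin> nts \<alpha> \<longrightarrow>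
        nts \<alpha> \<subseteq> {NT, NS, NN} \<union> NG ` {..<k})"

definition verbose_grammar :: "grammar \<Rightarrow> bool" where
  "verbose_grammar G \<longleftrightarrow>
     \<not> (\<exists>(X, \<alpha>) \<in> G. \<exists>k \<sigma>s. \<alpha> = clos (Var (NG k)) \<sigma>s)"

definition fin_int_partition :: "grammar \<Rightarrow> nat \<Rightarrow> nt lt \<Rightarrow> nt lt \<Rightarrow> nt lt set \<Rightarrow> bool" where
  "fin_int_partition G n \<alpha> \<beta> P \<longleftrightarrow>
     finite P \<and> (\<forall>p \<in> P. nts p \<subseteq> Nn n) \<and>
     (\<forall>p \<in> P. \<forall>q \<in> P. p \<noteq> q \<longrightarrow> lang G p \<inter> lang G q = {}) \<and>
     \<Union> (lang G ` P) = lang G \<alpha> \<inter> lang G \<beta>"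

definition phi :: "nt lt" where
  "phi = Lam (Clo (Var NT) (Lift (Var NS)))"

text \<open>Delta_phi^n, for a given choice Pi of finite intersection partitions\<close>
definition Delta :: "grammar \<Rightarrow> nat \<Rightarrow> (nt lt \<Rightarrow> nt lt \<Rightarrow> nt lt set) \<Rightarrow> nt lt set" where
  "Delta G n Pi = (\<Union>\<gamma> \<in> {\<gamma>. (NG n, \<gamma>) \<in> G}.
                     Pi \<gamma> (clos phi (replicate (cwidth \<gamma>) (Var NS))))"

end

theory Submission
  imports Defs
begin

declare lo_step.simps[simp del]

lemma clos_Nil[simp]: "clos x [] = x" by (simp add: clos_def)
lemma clos_Cons[simp]: "clos x (y#ys) = clos (Clo x y) ys" by (simp add: clos_def)
lemma clos_snoc[simp]: "clos x (ys@[y]) = Clo (clos x ys) y" by (simp add: clos_def)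
lemma clos_append: "clos (clos x ys) zs = clos x (ys@zs)" by (simp add: clos_def)

inductive_cases derVar: "is_der G (Var X) d t"
inductive_cases derZero: "is_der G Zero d t"
inductive_cases derShift: "is_der G Shift d t"
inductive_cases derSc: "is_der G (Sc p) d t"
inductive_cases derLam: "is_der G (Lam p) d t"
inductive_cases derSl: "is_der G (Sl p) d t"
inductive_cases derLift: "is_der G (Lift p) d t"
inductive_cases derApp: "is_der G (App p q) d t"
inductive_cases derClo: "is_der G (Clo p q) d t"

lemma lang_Var: "t \<in> lang G (Var X) \<longleftrightarrow> (\<exists>\<beta>. (X,\<beta>) \<in> G \<and> t \<in> lang G \<beta>)"
  unfolding lang_def by (auto elim!: derVar intro: is_der.intros)
lemma lang_Zero: "t \<in> lang G Zero \<longleftrightarrow> t = Zero"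
  unfolding lang_def by (auto elim!: derZero intro: is_der.intros)
lemma lang_Shift: "t \<in> lang G Shift \<longleftrightarrow> t = Shift"
  unfolding lang_def by (auto elim!: derShift intro: is_der.intros)
lemma lang_Sc: "t \<in> lang G (Sc p) \<longleftrightarrow> (\<exists>u. t = Sc u \<and> u \<in> lang G p)"
  unfolding lang_def by (auto elim!: derSc intro: is_der.intros)
lemma lang_Lam: "t \<in> lang G (Lam p) \<longleftrightarrow> (\<exists>u. t = Lam u \<and> u \<in> lang G p)"
  unfolding lang_def by (auto elim!: derLam intro: is_der.intros)
lemma lang_Sl: "t \<in> lang G (Sl p) \<longleftrightarrow> (\<exists>u. t = Sl u \<and> u \<in> lang G p)"
  unfolding lang_def by (auto elim!: derSl intro: is_der.intros)
lemma lang_Lift: "t \<in> lang G (Lift p) \<longleftrightarrow> (\<exists>u. t = Lift u \<and> u \<in> lang G p)"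
  unfolding lang_def by (auto elim!: derLift intro: is_der.intros)
lemma lang_App: "t \<in> lang G (App p q) \<longleftrightarrow> (\<exists>u v. t = App u v \<and> u \<in> lang G p \<and> v \<in> lang G q)"
  unfolding lang_def by (auto elim!: derApp intro: is_der.intros)
lemma lang_Clo: "t \<in> lang G (Clo p q) \<longleftrightarrow> (\<exists>u v. t = Clo u v \<and> u \<in> lang G p \<and> v \<in> lang G q)"
  unfolding lang_def by (auto elim!: derClo intro: is_der.intros)

lemmas lang_simps = lang_Zero lang_Shift lang_Sc lang_Lam lang_Sl lang_Lift lang_App lang_Clo

lemma langI_Var: "(X,\<beta>) \<in> G \<Longrightarrow> t \<in> lang G \<beta> \<Longrightarrow> t \<in> lang G (Var X)"
  using lang_Var by blast
lemma langI_Clo: "u \<in> lang G p \<Longrightarrow> v \<in> lang G q \<Longrightarrow> Clo u v \<in> lang G (Clo p q)"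
  by (simp add: lang_Clo)
lemma langI_Lam: "u \<in> lang G p \<Longrightarrow> Lam u \<in> lang G (Lam p)"
  by (simp add: lang_Lam)
lemma langI_Lift: "u \<in> lang G p \<Longrightarrow> Lift u \<in> lang G (Lift p)"
  by (simp add: lang_Lift)

lemma der_mono: "is_der H \<alpha> d t \<Longrightarrow> H \<subseteq> G \<Longrightarrow> is_der G \<alpha> d t"
  by (induction rule: is_der.induct) (auto intro: is_der.intros)
lemma lang_mono: "H \<subseteq> G \<Longrightarrow> t \<in> lang H \<alpha> \<Longrightarrow> t \<in> lang G \<alpha>"
  unfolding lang_def using der_mono by blast

fun is_clo :: "'v lt \<Rightarrow> bool" where
  "is_clo (Clo _ _) = True" | "is_clo _ = False"

lemma clos_is_clo: "ys \<noteq> [] \<Longrightarrow> is_clo (clos x ys)"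
  by (cases ys rule: rev_cases) auto
lemma clos_is_clo2: "is_clo x \<Longrightarrow> is_clo (clos x ys)"
  by (cases ys rule: rev_cases) auto

lemma fw:
  assumes "clos x xs \<in> lang G (clos p ps)" "\<not> is_clo x"
  shows "length ps \<le> length xs \<and> clos x (take (length xs - length ps) xs) \<in> lang G p \<and>
         list_all2 (\<lambda>u q. u \<in> lang G q) (drop (length xs - length ps) xs) ps"
  using assms
proof (induction ps arbitrary: xs rule: rev_induct)
  case Nil then show ?case by simp
next
  case (snoc q ps)
  from snoc.prems(1) obtain u v where uv: "clos x xs = Clo u v" "u \<in> lang G (clos p ps)" "v \<in> lang G q"
    by (auto simp: lang_Clo)
  have "xs \<noteq> []" using uv(1) snoc.prems(2) by auto
  then obtain xs' y where xs: "xs = xs' @ [y]" by (cases xs rule: rev_cases) auto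
  with uv have u: "u = clos x xs'" and v: "v = y" by auto
  from snoc.IH[of xs'] uv(2) u snoc.prems(2) have IH:
    "length ps \<le> length xs' \<and> clos x (take (length xs' - length ps) xs') \<in> lang G p \<and>
         list_all2 (\<lambda>u q. u \<in> lang G q) (drop (length xs' - length ps) xs') ps" by simp
  then show ?case using xs v uv(3) by (auto intro!: list_all2_appendI)
qed

lemma cv: "list_all2 (\<lambda>u q. u \<in> lang G q) xs ps \<Longrightarrow> x \<in> lang G p \<Longrightarrow> clos x xs \<in> lang G (clos p ps)"
proof (induction xs ps arbitrary: x p rule: list_all2_induct)
  case Nil then show ?case by simp
next
  case (Cons y q xs ps) then show ?case by (simp add: langI_Clo)
qed

lemma nts_clos: "nts (clos p ps) = nts p \<union> (\<Union>q\<in>set ps. nts q)"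
  by (induction ps arbitrary: p) auto

lemma cwidth_clos: "cwidth (clos p ps) = cwidth p + length ps"
  by (induction ps arbitrary: p) auto

lemma cwidth_nc: "\<not> is_clo h \<Longrightarrow> cwidth h = 0"
  by (cases h) auto

lemma decomp: "\<exists>h ps. \<gamma> = clos h ps \<and> \<not> is_clo h"
proof (induction \<gamma>)
  case (Clo a b)
  then obtain h ps where "a = clos h ps" "\<not> is_clo h" by blast
  then show ?case by (intro exI[of _ h] exI[of _ "ps@[b]"]) simp
next
  case (Var x) show ?case by (metis clos_Nil is_clo.simps)
next
  case Zero show ?case by (metis clos_Nil is_clo.simps)
next
  case (Sc x) show ?case by (metis clos_Nil is_clo.simps)
next
  case (Lam x) show ?case by (metis clos_Nil is_clo.simps)
next
  case (App x y) show ?case by (metis clos_Nil is_clo.simps)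
next
  case (Sl x) show ?case by (metis clos_Nil is_clo.simps)
next
  case (Lift x) show ?case by (metis clos_Nil is_clo.simps)
next
  case Shift show ?case by (metis clos_Nil is_clo.simps)
qed

lemma nonclo: "t \<in> lang G h \<Longrightarrow> \<not> is_clo h \<Longrightarrow> (\<forall>X. h \<noteq> Var X) \<Longrightarrow> \<not> is_clo t"
  by (cases h) (auto simp: lang_simps)

fun hd_lt :: "'v lt \<Rightarrow> 'v lt" where
  "hd_lt (Clo x y) = hd_lt x" | "hd_lt x = x"

lemma hd_clos: "hd_lt (clos x ys) = hd_lt x"
  by (induction ys arbitrary: x) auto

lemma hd_phi: "t \<in> lang G (clos phi ps) \<Longrightarrow> \<exists>u. hd_lt t = Lam u"
proof (induction ps arbitrary: t rule: rev_induct)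
  case Nil then show ?case by (auto simp: phi_def lang_Lam)
next
  case (snoc q ps) then show ?case by (auto simp: lang_Clo)
qed


lemma lo_root: "root_step t = Some t' \<Longrightarrow> lo_step t = Some t'"
  by (subst lo_step.simps) simp
lemma lo_Clo: "root_step (Clo x y) = None \<Longrightarrow> lo_step (Clo x y) =
   (case lo_step x of Some x' \<Rightarrow> Some (Clo x' y) | None \<Rightarrow> map_option (Clo x) (lo_step y))"
  by (subst lo_step.simps) simp
lemma lo_Zero: "lo_step Zero = None"
  by (subst lo_step.simps) simp
lemma lo_Sc: "lo_step (Sc x) = map_option Sc (lo_step x)"
  by (subst lo_step.simps) simp

lemma lo_ctx: "is_clo x \<Longrightarrow> lo_step x = Some x' \<Longrightarrow> lo_step (clos x qs) = Some (clos x' qs)"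
proof (induction qs rule: rev_induct)
  case Nil then show ?case by simp
next
  case (snoc q qs)
  have "is_clo (clos x qs)" by (rule clos_is_clo2[OF snoc.prems(1)])
  then obtain u v where "clos x qs = Clo u v" by (cases "clos x qs") auto
  then have "root_step (Clo (clos x qs) q) = None" by (cases q) auto
  then show ?case using snoc by (simp add: lo_Clo)
qed

lemma ns_Some: "lo_step t = Some t' \<Longrightarrow> norm_steps t k \<longleftrightarrow> (\<exists>k'. k = Suc k' \<and> norm_steps t' k')"
  by (auto elim: norm_steps.cases intro: norm_steps.intros)
lemma ns_None: "lo_step t = None \<Longrightarrow> norm_steps t k \<longleftrightarrow> k = 0"
  by (auto elim: norm_steps.cases intro: norm_steps.intros)

lemma idx_nf: "lo_step ((Sc ^^ j) Zero) = None"
  by (induction j) (auto simp: lo_Zero lo_Sc)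
lemma idx_is: "is_idx ((Sc ^^ j) Zero)"
  by (induction j) auto

lemma shift_step: "lo_step (clos ((Sc ^^ j) Zero) (Shift # qs)) = Some (clos ((Sc ^^ Suc j) Zero) qs)"
proof -
  have "lo_step (Clo ((Sc ^^ j) Zero) Shift) = Some ((Sc ^^ Suc j) Zero)"
    by (rule lo_root) (cases j, simp_all add: idx_is)
  then show ?thesis using lo_ctx[of "Clo ((Sc ^^ j) Zero) Shift"] by simp
qed

lemma count_ge: "norm_steps (clos ((Sc ^^ j) Zero) (replicate i Shift @ qs)) k \<Longrightarrow> i \<le> k"
proof (induction i arbitrary: j k)
  case 0 then show ?case by simp
next
  case (Suc i)
  from Suc.prems shift_step[of j "replicate i Shift @ qs"] obtain k' where
    "k = Suc k'" "norm_steps (clos ((Sc ^^ Suc j) Zero) (replicate i Shift @ qs)) k'"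
    using ns_Some by fastforce
  then show ?case using Suc.IH by fastforce
qed

lemma count_eq: "norm_steps (clos ((Sc ^^ j) (Zero::nt lt)) (replicate i Shift)) i"
proof (induction i arbitrary: j)
  case 0 then show ?case using norm_steps.intros(1)[OF idx_nf[of j]] by simp
next
  case (Suc i)
  have "norm_steps (clos ((Sc ^^ Suc j) (Zero::nt lt)) (replicate i Shift)) i" using Suc.IH[of "Suc j"] by simp
  then show ?case using norm_steps.intros(2)[OF shift_step[of j "replicate i Shift"]] by simp
qed

lemma rep_snoc: "replicate (Suc k) x = replicate k x @ [x]"
  by (induction k) auto

lemma lu_shift: "clos Zero (replicate k Shift) \<in> lang Lambda (Var NT)"
proof (induction k)
  case 0
  show ?case by (rule langI_Var[where \<beta>="Var NN"]) (auto simp: Lambda_def intro!: langI_Var[where \<beta>=Zero] simp: lang_Zero)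
next
  case (Suc k)
  have "Shift \<in> lang Lambda (Var NS)"
    by (rule langI_Var[where \<beta>=Shift]) (auto simp: Lambda_def lang_Shift)
  then show ?case using Suc unfolding rep_snoc
    by (auto simp: Lambda_def intro!: langI_Var[where \<beta>="Clo (Var NT) (Var NS)"] langI_Clo)
qed

lemma NN_shape: "t \<in> lang G (Var NN) \<Longrightarrow> \<forall>\<beta>. (NN,\<beta>)\<in>G \<longrightarrow> (NN,\<beta>)\<in>Lambda \<Longrightarrow> \<not> is_clo t"
proof -
  assume a: "t \<in> lang G (Var NN)" and b: "\<forall>\<beta>. (NN,\<beta>)\<in>G \<longrightarrow> (NN,\<beta>)\<in>Lambda"
  then obtain \<beta> where c: "(NN,\<beta>) \<in> G" "t \<in> lang G \<beta>" using lang_Var by blast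
  then have "\<beta> = Zero \<or> \<beta> = Sc (Var NN)" using b by (auto simp: Lambda_def)
  then show ?thesis using c(2) by (auto simp: lang_simps)
qed
lemma NS_shape: "t \<in> lang G (Var NS) \<Longrightarrow> \<forall>\<beta>. (NS,\<beta>)\<in>G \<longrightarrow> (NS,\<beta>)\<in>Lambda \<Longrightarrow> \<not> is_clo t"
proof -
  assume a: "t \<in> lang G (Var NS)" and b: "\<forall>\<beta>. (NS,\<beta>)\<in>G \<longrightarrow> (NS,\<beta>)\<in>Lambda"
  then obtain \<beta> where c: "(NS,\<beta>) \<in> G" "t \<in> lang G \<beta>" using lang_Var by blast
  then have "\<beta> = Sl (Var NT) \<or> \<beta> = Lift (Var NS) \<or> \<beta> = Shift" using b by (auto simp: Lambda_def)
  then show ?thesis using c(2) by (auto simp: lang_simps)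
qed

lemma lamNT_Clo: "Clo u v \<in> lang Lambda (Var NT) \<Longrightarrow> u \<in> lang Lambda (Var NT) \<and> v \<in> lang Lambda (Var NS)"
proof -
  assume a: "Clo u v \<in> lang Lambda (Var NT)"
  then obtain \<beta> where b: "(NT,\<beta>) \<in> Lambda" "Clo u v \<in> lang Lambda \<beta>" using lang_Var by blast
  then have "\<beta> = Var NN \<or> \<beta> = Lam (Var NT) \<or> \<beta> = App (Var NT) (Var NT) \<or> \<beta> = Clo (Var NT) (Var NS)"
    by (auto simp: Lambda_def)
  moreover have "\<beta> \<noteq> Var NN" using NN_shape[of "Clo u v" Lambda] b by auto
  ultimately show ?thesis using b(2) by (auto simp: lang_simps)
qed

lemma lamNT_Lam: "Lam u \<in> lang Lambda (Var NT) \<Longrightarrow> u \<in> lang Lambda (Var NT)"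
proof -
  assume a: "Lam u \<in> lang Lambda (Var NT)"
  then obtain \<beta> where b: "(NT,\<beta>) \<in> Lambda" "Lam u \<in> lang Lambda \<beta>" using lang_Var by blast
  then have "\<beta> = Var NN \<or> \<beta> = Lam (Var NT) \<or> \<beta> = App (Var NT) (Var NT) \<or> \<beta> = Clo (Var NT) (Var NS)"
    by (auto simp: Lambda_def)
  moreover have "\<beta> \<noteq> Var NN" using b by (auto simp: lang_Var Lambda_def lang_simps)
  ultimately show ?thesis using b(2) by (auto simp: lang_simps)
qed

lemma lu_dec: "clos x xs \<in> lang Lambda (Var NT) \<Longrightarrow> \<not> is_clo x \<Longrightarrow>
   x \<in> lang Lambda (Var NT) \<and> (\<forall>y\<in>set xs. y \<in> lang Lambda (Var NS))"
proof (induction xs rule: rev_induct)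
  case Nil then show ?case by simp
next
  case (snoc y xs)
  then show ?case using lamNT_Clo[of "clos x xs" y] by auto
qed

lemma lu_build: "x \<in> lang Lambda (Var NT) \<Longrightarrow> \<forall>y\<in>set xs. y \<in> lang Lambda (Var NS) \<Longrightarrow>
   clos x xs \<in> lang Lambda (Var NT)"
proof (induction xs arbitrary: x)
  case Nil then show ?case by simp
next
  case (Cons y xs)
  have "Clo x y \<in> lang Lambda (Var NT)" using Cons.prems
    by (auto simp: Lambda_def intro!: langI_Var[where \<beta>="Clo (Var NT) (Var NS)"] langI_Clo)
  then show ?case using Cons by simp
qed

fun wit :: "nt \<Rightarrow> nt lt" where
  "wit NT = Zero" | "wit NS = Shift" | "wit NN = Zero" | "wit (NG k) = clos Zero (replicate k Shift)"

lemma shift_shape: "clos Zero (replicate k Shift) = Zero \<or> (\<exists>u. clos Zero (replicate k Shift) = Clo u Shift)"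
  by (cases k) (auto simp: rep_snoc simp del: replicate_Suc)

lemma wit_nCL: "wit X \<noteq> Clo u (Lift v)"
proof (cases X)
  case (NG k) then show ?thesis using shift_shape[of k] by (metis lt.distinct lt.inject wit.simps(4))
qed auto

lemma wit_nL: "wit X \<noteq> Lift v"
proof (cases X)
  case (NG k) then show ?thesis using shift_shape[of k] by (metis lt.distinct lt.inject wit.simps(4))
qed auto

lemma wit_hd: "hd_lt (wit X) = Zero \<or> hd_lt (wit X) = Shift"
  by (cases X) (auto simp: hd_clos)

lemma wit_lang:
  assumes ug: "upsilon_grammar G n" and X: "X \<in> Nn n"
  shows "wit X \<in> lang G (Var X)"
proof -
  have LG: "Lambda \<subseteq> G" using ug by (simp add: upsilon_grammar_def)
  show ?thesis
  proof (cases X)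
    case NT then show ?thesis using lu_shift[of 0] lang_mono[OF LG] by simp
  next
    case NS
    have "Shift \<in> lang Lambda (Var NS)"
      by (rule langI_Var[where \<beta>=Shift]) (auto simp: Lambda_def lang_Shift)
    then show ?thesis using NS lang_mono[OF LG] by simp
  next
    case NN
    have "Zero \<in> lang Lambda (Var NN)"
      by (rule langI_Var[where \<beta>=Zero]) (auto simp: Lambda_def lang_Zero)
    then show ?thesis using NN lang_mono[OF LG] by simp
  next
    case (NG k)
    then have "k \<le> n" using X by (auto simp: Nn_def)
    then have "lang G (Var (NG k)) = {t. lu_term t \<and> norm_steps t k}" using ug
      by (simp add: upsilon_grammar_def)
    moreover have "norm_steps (clos (Zero::nt lt) (replicate k Shift)) k" using count_eq[of 0 k] by simp
    ultimately show ?thesis using NG lu_shift by (simp add: lu_term_def)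
  qed
qed

lemma nonempty: "upsilon_grammar G n \<Longrightarrow> nts p \<subseteq> Nn n \<Longrightarrow> \<exists>u. u \<in> lang G p"
proof (induction p)
  case (Var x) then show ?case using wit_lang by fastforce
qed (auto simp: lang_simps)

lemma inst_list: "upsilon_grammar G n \<Longrightarrow> \<forall>q\<in>set qs. nts q \<subseteq> Nn n \<Longrightarrow>
   \<exists>us. list_all2 (\<lambda>u q. u \<in> lang G q) us qs"
proof (induction qs)
  case Nil then show ?case by simp
next
  case (Cons q qs)
  then obtain us where "list_all2 (\<lambda>u q. u \<in> lang G q) us qs" by auto
  moreover obtain u where "u \<in> lang G q" using nonempty Cons.prems by fastforce
  ultimately show ?case by (intro exI[of _ "u#us"]) simp
qed


lemma shape:
  assumes ug: "upsilon_grammar G n" and nt: "nts \<pi> \<subseteq> Nn n"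
    and sub: "lang G \<pi> \<subseteq> lang G (clos phi (replicate (length ss) (Var NS)))"
    and mem: "clos (Lam (Clo a (Lift s))) ss \<in> lang G \<pi>"
  shows "\<exists>\<alpha> \<sigma> qs. \<pi> = clos (Lam (Clo \<alpha> (Lift \<sigma>))) qs \<and> length qs = length ss"
proof -
  obtain h qs where \<pi>: "\<pi> = clos h qs" and hnc: "\<not> is_clo h" using decomp by blast
  have ntq: "\<forall>q\<in>set qs. nts q \<subseteq> Nn n" and nth: "nts h \<subseteq> Nn n" using nt \<pi> by (auto simp: nts_clos)
  obtain qs' where qs': "list_all2 (\<lambda>u q. u \<in> lang G q) qs' qs" using inst_list[OF ug ntq] by blast
  have lq: "length qs' = length qs" using qs' list_all2_lengthD by blast
  have f: "length qs \<le> length ss"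
    "clos (Lam (Clo a (Lift s))) (take (length ss - length qs) ss) \<in> lang G h"
    using fw[OF mem[unfolded \<pi>]] by auto
  have hnv: "\<forall>X. h \<noteq> Var X"
  proof (intro allI notI)
    fix X assume hX: "h = Var X"
    then have X: "X \<in> Nn n" using nth by simp
    have "clos (wit X) qs' \<in> lang G \<pi>" using cv[OF qs' wit_lang[OF ug X]] \<pi> hX by simp
    then have "clos (wit X) qs' \<in> lang G (clos phi (replicate (length ss) (Var NS)))" using sub by blast
    then obtain u where "hd_lt (clos (wit X) qs') = Lam u" using hd_phi by blast
    then show False using wit_hd[of X] by (simp add: hd_clos)
  qed
  have len: "length qs = length ss"
  proof (rule ccontr)
    assume "length qs \<noteq> length ss"
    then have "take (length ss - length qs) ss \<noteq> []" using f(1) by auto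
    then have "is_clo (clos (Lam (Clo a (Lift s))) (take (length ss - length qs) ss))" by (rule clos_is_clo)
    with nonclo[OF f(2) hnc hnv] show False by simp
  qed
  then have Lh: "Lam (Clo a (Lift s)) \<in> lang G h" using f(2) by simp
  then obtain p where hp: "h = Lam p" and pm: "Clo a (Lift s) \<in> lang G p" using hnv
    by (cases h) (auto simp: lang_simps)
  have lq2: "length qs' = length (replicate (length ss) (Var NS :: nt lt))" using lq len by simp
  have pnv: "\<forall>X. p \<noteq> Var X"
  proof (intro allI notI)
    fix X assume pX: "p = Var X"
    then have X: "X \<in> Nn n" using nth hp by simp
    have "clos (Lam (wit X)) qs' \<in> lang G \<pi>"
      using cv[OF qs' langI_Lam[OF wit_lang[OF ug X]]] \<pi> hp pX by simp
    then have m: "clos (Lam (wit X)) qs' \<in> lang G (clos phi (replicate (length ss) (Var NS)))" using sub by blast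
    have "Lam (wit X) \<in> lang G phi" using fw[OF m] lq2 by simp
    then have "wit X \<in> lang G (Clo (Var NT) (Lift (Var NS)))" by (simp add: phi_def lang_Lam)
    then obtain u v where "wit X = Clo u (Lift v)" by (auto simp: lang_Clo lang_Lift)
    then show False using wit_nCL by blast
  qed
  then obtain \<alpha> p2 where hp2: "p = Clo \<alpha> p2" and am: "a \<in> lang G \<alpha>" and p2m: "Lift s \<in> lang G p2"
    using pm by (cases p) (auto simp: lang_simps)
  have p2nv: "\<forall>X. p2 \<noteq> Var X"
  proof (intro allI notI)
    fix X assume pX: "p2 = Var X"
    then have X: "X \<in> Nn n" using nth hp hp2 by simp
    have "clos (Lam (Clo a (wit X))) qs' \<in> lang G \<pi>"
      using cv[OF qs' langI_Lam[OF langI_Clo[OF am wit_lang[OF ug X]]]] \<pi> hp hp2 pX by simp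
    then have m: "clos (Lam (Clo a (wit X))) qs' \<in> lang G (clos phi (replicate (length ss) (Var NS)))" using sub by blast
    have "Lam (Clo a (wit X)) \<in> lang G phi" using fw[OF m] lq2 by simp
    then have "wit X \<in> lang G (Lift (Var NS))" by (simp add: phi_def lang_Lam lang_Clo)
    then obtain v where "wit X = Lift v" by (auto simp: lang_Lift)
    then show False using wit_nL by blast
  qed
  then obtain \<sigma> where "p2 = Lift \<sigma>"
    using p2m by (cases p2) (auto simp: lang_simps)
  then show ?thesis using \<pi> hp hp2 len by blast
qed


lemma rep_all2: "\<forall>y\<in>set ys. y \<in> lang G q \<Longrightarrow> list_all2 (\<lambda>u p. u \<in> lang G p) ys (replicate (length ys) q)"
  by (induction ys) auto

theorem mainTheorem7:
  fixes G :: grammar and n :: nat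
    and Pi :: "nt lt \<Rightarrow> nt lt \<Rightarrow> nt lt set"
    and a s :: "nt lt" and ss :: "nt lt list"
  assumes "upsilon_grammar G n"
    and "simple_grammar G"
    and "verbose_grammar G"
    and "\<forall>\<alpha> \<beta>. nts \<alpha> \<subseteq> Nn n \<and> nts \<beta> \<subseteq> Nn n \<longrightarrow> fin_int_partition G n \<alpha> \<beta> (Pi \<alpha> \<beta>)"
    and "lu_term (clos (Clo (Lam a) s) ss)"
  shows "norm_steps (clos (Clo (Lam a) s) ss) (Suc n) \<longleftrightarrow>
    (\<exists>!\<pi>. \<pi> \<in> Delta G n Pi \<and>
       (\<exists>\<alpha> \<sigma> \<sigma>s. \<pi> = clos (Lam (Clo \<alpha> (Lift \<sigma>))) \<sigma>s \<and> length \<sigma>s = length ss \<and>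
          clos (Clo (Lam a) s) ss \<in> lang G (clos (Clo (Lam \<alpha>) \<sigma>) \<sigma>s)))"
proof -
  let ?t = "clos (Clo (Lam a) s) ss"
  let ?t' = "clos (Lam (Clo a (Lift s))) ss"
  let ?w = "length ss"
  define B where "B \<gamma> = clos phi (replicate (cwidth \<gamma>) (Var NS))" for \<gamma> :: "nt lt"
  from assms(1) have LG: "Lambda \<subseteq> G" and prodnts: "\<forall>(X,\<alpha>)\<in>G. X \<in> Nn n \<and> nts \<alpha> \<subseteq> Nn n"
    and nonG: "\<forall>(X,\<alpha>)\<in>G. X \<in> {NT,NS,NN} \<longrightarrow> (X,\<alpha>) \<in> Lambda"
    and unam: "unambiguous G (NG n)" and langn: "lang G (Var (NG n)) = {t. lu_term t \<and> norm_steps t n}"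
    by (auto simp: upsilon_grammar_def)
  have step: "lo_step ?t = Some ?t'"
    using lo_ctx[of "Clo (Lam a) s" "Lam (Clo a (Lift s))" ss] lo_root[of "Clo (Lam a) s"] by simp
  have ns: "norm_steps ?t (Suc n) \<longleftrightarrow> norm_steps ?t' n" using ns_Some[OF step] by simp
  have "clos (Lam a) (s#ss) \<in> lang Lambda (Var NT)" using assms(5) by (simp add: lu_term_def)
  from lu_dec[OF this] have aL: "a \<in> lang Lambda (Var NT)" and sL: "s \<in> lang Lambda (Var NS)"
    and ssL: "\<forall>y\<in>set ss. y \<in> lang Lambda (Var NS)"
    using lamNT_Lam by auto
  have m1: "(NS, Lift (Var NS)) \<in> Lambda" "(NT, Clo (Var NT) (Var NS)) \<in> Lambda" "(NT, Lam (Var NT)) \<in> Lambda"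
    by (simp_all add: Lambda_def)
  have LL: "Lam (Clo a (Lift s)) \<in> lang Lambda (Var NT)"
    by (rule langI_Var[OF m1(3) langI_Lam[OF langI_Var[OF m1(2) langI_Clo[OF aL langI_Var[OF m1(1) langI_Lift[OF sL]]]]]])
  have lu': "lu_term ?t'" using lu_build[OF LL ssL] by (simp add: lu_term_def)
  have t'n: "?t' \<in> lang G (Var (NG n)) \<longleftrightarrow> norm_steps ?t' n" using langn lu' by simp
  have rel: "?t \<in> lang G (clos (Clo (Lam \<alpha>) \<sigma>) \<sigma>s) \<longleftrightarrow> ?t' \<in> lang G (clos (Lam (Clo \<alpha> (Lift \<sigma>))) \<sigma>s)"
    if "length \<sigma>s = length ss" for \<alpha> \<sigma> \<sigma>s
  proof
    assume "?t \<in> lang G (clos (Clo (Lam \<alpha>) \<sigma>) \<sigma>s)"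
    then have "clos (Lam a) (s#ss) \<in> lang G (clos (Lam \<alpha>) (\<sigma>#\<sigma>s))" by simp
    from fw[OF this] that have "Lam a \<in> lang G (Lam \<alpha>)" "list_all2 (\<lambda>u q. u \<in> lang G q) (s#ss) (\<sigma>#\<sigma>s)"
      by simp_all
    then show "?t' \<in> lang G (clos (Lam (Clo \<alpha> (Lift \<sigma>))) \<sigma>s)"
      by (auto intro!: cv langI_Lam langI_Clo langI_Lift simp: lang_Lam)
  next
    assume "?t' \<in> lang G (clos (Lam (Clo \<alpha> (Lift \<sigma>))) \<sigma>s)"
    from fw[OF this] that have h1: "Lam (Clo a (Lift s)) \<in> lang G (Lam (Clo \<alpha> (Lift \<sigma>)))"
      and h2: "list_all2 (\<lambda>u q. u \<in> lang G q) ss \<sigma>s" by simp_all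
    from h1 have "a \<in> lang G \<alpha>" "s \<in> lang G \<sigma>" by (auto simp: lang_simps)
    then have "clos (Lam a) (s#ss) \<in> lang G (clos (Lam \<alpha>) (\<sigma>#\<sigma>s))"
      using h2 by (intro cv) (auto intro: langI_Lam)
    then show "?t \<in> lang G (clos (Clo (Lam \<alpha>) \<sigma>) \<sigma>s)" by simp
  qed
  have Delta_iff: "\<pi> \<in> Delta G n Pi \<longleftrightarrow> (\<exists>\<gamma>. (NG n, \<gamma>) \<in> G \<and> \<pi> \<in> Pi \<gamma> (B \<gamma>))" for \<pi>
    by (auto simp: Delta_def B_def)
  have part: "fin_int_partition G n \<gamma> (B \<gamma>) (Pi \<gamma> (B \<gamma>))" if "(NG n, \<gamma>) \<in> G" for \<gamma>
  proof -
    have "nts \<gamma> \<subseteq> Nn n" using prodnts that by auto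
    moreover have "nts (B \<gamma>) \<subseteq> Nn n" by (auto simp: B_def nts_clos phi_def Nn_def)
    ultimately show ?thesis using assms(4) by blast
  qed
  have pU: "\<Union> (lang G ` Pi \<gamma> (B \<gamma>)) = lang G \<gamma> \<inter> lang G (B \<gamma>)"
    and pD: "\<forall>p \<in> Pi \<gamma> (B \<gamma>). \<forall>q \<in> Pi \<gamma> (B \<gamma>). p \<noteq> q \<longrightarrow> lang G p \<inter> lang G q = {}"
    and pN: "\<forall>p \<in> Pi \<gamma> (B \<gamma>). nts p \<subseteq> Nn n"
    if "(NG n, \<gamma>) \<in> G" for \<gamma>
    using part[OF that] unfolding fin_int_partition_def by simp_all
  have in\<gamma>: "lang G \<pi> \<subseteq> lang G \<gamma> \<inter> lang G (B \<gamma>)" if "\<pi> \<in> Pi \<gamma> (B \<gamma>)" "(NG n, \<gamma>) \<in> G" for \<pi> \<gamma>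
  proof -
    have "lang G \<pi> \<subseteq> \<Union> (lang G ` Pi \<gamma> (B \<gamma>))" using that(1) by blast
    then show ?thesis using pU[OF that(2)] by simp
  qed
  have uniq: "\<pi>1 = \<pi>2" if u1: "\<pi>1 \<in> Delta G n Pi" "\<pi>2 \<in> Delta G n Pi" "?t' \<in> lang G \<pi>1" "?t' \<in> lang G \<pi>2"
    for \<pi>1 \<pi>2
  proof -
    obtain \<gamma>1 where g1: "(NG n, \<gamma>1) \<in> G" "\<pi>1 \<in> Pi \<gamma>1 (B \<gamma>1)" using u1(1) unfolding Delta_iff by blast
    obtain \<gamma>2 where g2: "(NG n, \<gamma>2) \<in> G" "\<pi>2 \<in> Pi \<gamma>2 (B \<gamma>2)" using u1(2) unfolding Delta_iff by blast
    have "?t' \<in> lang G \<gamma>1" using in\<gamma>[OF g1(2) g1(1)] u1(3) by blast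
    then obtain d1 where d1: "is_der G \<gamma>1 d1 ?t'" by (auto simp: lang_def)
    have "?t' \<in> lang G \<gamma>2" using in\<gamma>[OF g2(2) g2(1)] u1(4) by blast
    then obtain d2 where d2: "is_der G \<gamma>2 d2 ?t'" by (auto simp: lang_def)
    have "is_der G (Var (NG n)) (DVar (NG n, \<gamma>1) d1) ?t'" by (rule is_der.intros(1)[OF g1(1) d1])
    moreover have "is_der G (Var (NG n)) (DVar (NG n, \<gamma>2) d2) ?t'" by (rule is_der.intros(1)[OF g2(1) d2])
    ultimately have "DVar (NG n, \<gamma>1) d1 = DVar (NG n, \<gamma>2) d2" using unam[unfolded unambiguous_def] by blast
    then have "\<gamma>1 = \<gamma>2" by simp
    then have "\<pi>2 \<in> Pi \<gamma>1 (B \<gamma>1)" using g2 by simp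
    then have p2: "\<pi>2 \<in> Pi \<gamma>1 (B \<gamma>1)" .
    show ?thesis
    proof (rule ccontr)
      assume ne: "\<pi>1 \<noteq> \<pi>2"
      have "lang G \<pi>1 \<inter> lang G \<pi>2 = {}" using pD[OF g1(1)] g1(2) p2 ne by blast
      then show False using that(3,4) by blast
    qed
  qed
  show ?thesis
  proof
    assume "norm_steps ?t (Suc n)"
    then have "?t' \<in> lang G (Var (NG n))" using ns t'n by simp
    then obtain \<gamma> where g: "(NG n, \<gamma>) \<in> G" "?t' \<in> lang G \<gamma>" using lang_Var by blast
    obtain h \<sigma>s where \<gamma>: "\<gamma> = clos h \<sigma>s" and hnc: "\<not> is_clo h" using decomp by blast
    have ntg: "nts \<gamma> \<subseteq> Nn n" using prodnts g(1) by auto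
    have f: "length \<sigma>s \<le> ?w" "clos (Lam (Clo a (Lift s))) (take (?w - length \<sigma>s) ss) \<in> lang G h"
      "list_all2 (\<lambda>u q. u \<in> lang G q) (drop (?w - length \<sigma>s) ss) \<sigma>s"
      using fw[OF g(2)[unfolded \<gamma>]] by auto
    have len: "length \<sigma>s = ?w"
    proof (rule ccontr)
      assume "length \<sigma>s \<noteq> ?w"
      then have "take (?w - length \<sigma>s) ss \<noteq> []" using f(1) by auto
      then have ic: "is_clo (clos (Lam (Clo a (Lift s))) (take (?w - length \<sigma>s) ss))" by (rule clos_is_clo)
      then obtain X where hX: "h = Var X" using nonclo[OF f(2) hnc] by blast
      have X: "X \<in> Nn n" using ntg \<gamma> hX by (simp add: nts_clos)
      show False
      proof (cases X)
        case NT
        have ntq: "\<forall>q\<in>set \<sigma>s. nts q \<subseteq> Nn n" using ntg \<gamma> by (auto simp: nts_clos)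
        obtain qs' where qs': "list_all2 (\<lambda>u q. u \<in> lang G q) qs' \<sigma>s" using inst_list[OF assms(1) ntq] by blast
        have "clos Zero (replicate (Suc n) Shift) \<in> lang G (Var NT)" using lang_mono[OF LG lu_shift] .
        then have "clos (clos Zero (replicate (Suc n) Shift)) qs' \<in> lang G \<gamma>" using cv[OF qs'] \<gamma> hX NT by simp
        then have "clos (clos Zero (replicate (Suc n) Shift)) qs' \<in> lang G (Var (NG n))"
          using g(1) langI_Var by blast
        then have "norm_steps (clos Zero (replicate (Suc n) Shift @ qs')) n" using langn by (simp add: clos_append)
        then have "Suc n \<le> n" using count_ge[of 0 "Suc n" qs' n] by simp
        then show False by simp
      next
        case NS
        have "\<forall>\<beta>. (NS,\<beta>)\<in>G \<longrightarrow> (NS,\<beta>)\<in>Lambda" using nonG by auto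
        then show False using NS_shape[OF f(2)[unfolded hX NS]] ic by blast
      next
        case NN
        have "\<forall>\<beta>. (NN,\<beta>)\<in>G \<longrightarrow> (NN,\<beta>)\<in>Lambda" using nonG by auto
        then show False using NN_shape[OF f(2)[unfolded hX NN]] ic by blast
      next
        case (NG k)
        have "(NG n, clos (Var (NG k)) \<sigma>s) \<in> G" using g(1) \<gamma> hX NG by simp
        then show False using assms(3) unfolding verbose_grammar_def by blast
      qed
    qed
    have ssl: "list_all2 (\<lambda>u q. u \<in> lang G q) ss \<sigma>s" using f(3) len by simp
    have cw: "cwidth \<gamma> = ?w" unfolding \<gamma> cwidth_clos using cwidth_nc[OF hnc] len by simp
    have rep: "list_all2 (\<lambda>u q. u \<in> lang G q) ss (replicate ?w (Var NS))"
      using ssL lang_mono[OF LG] by (intro rep_all2) blast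
    have "Lam (Clo a (Lift s)) \<in> lang G phi" using lang_mono[OF LG aL] lang_mono[OF LG sL]
      by (simp add: phi_def langI_Lam langI_Clo langI_Lift)
    then have tB: "?t' \<in> lang G (B \<gamma>)" using cv[OF rep] cw by (simp add: B_def)
    have "?t' \<in> \<Union> (lang G ` Pi \<gamma> (B \<gamma>))" using pU[OF g(1)] g(2) tB by simp
    then obtain \<pi> where \<pi>: "\<pi> \<in> Pi \<gamma> (B \<gamma>)" "?t' \<in> lang G \<pi>" by blast
    have nt\<pi>: "nts \<pi> \<subseteq> Nn n" using pN[OF g(1)] \<pi>(1) by blast
    have sub\<pi>: "lang G \<pi> \<subseteq> lang G (clos phi (replicate ?w (Var NS)))"
      using in\<gamma>[OF \<pi>(1) g(1)] cw by (auto simp: B_def)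
    obtain \<alpha> \<sigma> qs where \<pi>s: "\<pi> = clos (Lam (Clo \<alpha> (Lift \<sigma>))) qs" "length qs = ?w"
      using shape[OF assms(1) nt\<pi> sub\<pi> \<pi>(2)] by blast
    have \<pi>D: "\<pi> \<in> Delta G n Pi" using Delta_iff g(1) \<pi>(1) by blast
    have tin: "?t \<in> lang G (clos (Clo (Lam \<alpha>) \<sigma>) qs)" using rel[OF \<pi>s(2)] \<pi>(2) \<pi>s(1) by simp
    show "\<exists>!\<pi>. \<pi> \<in> Delta G n Pi \<and>
       (\<exists>\<alpha> \<sigma> \<sigma>s. \<pi> = clos (Lam (Clo \<alpha> (Lift \<sigma>))) \<sigma>s \<and> length \<sigma>s = length ss \<and>
          ?t \<in> lang G (clos (Clo (Lam \<alpha>) \<sigma>) \<sigma>s))"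
    proof (rule ex1I[of _ \<pi>])
      show "\<pi> \<in> Delta G n Pi \<and>
       (\<exists>\<alpha> \<sigma> \<sigma>s. \<pi> = clos (Lam (Clo \<alpha> (Lift \<sigma>))) \<sigma>s \<and> length \<sigma>s = length ss \<and>
          ?t \<in> lang G (clos (Clo (Lam \<alpha>) \<sigma>) \<sigma>s))" using \<pi>D \<pi>s tin by blast
    next
      fix \<pi>2 assume a2: "\<pi>2 \<in> Delta G n Pi \<and>
       (\<exists>\<alpha> \<sigma> \<sigma>s. \<pi>2 = clos (Lam (Clo \<alpha> (Lift \<sigma>))) \<sigma>s \<and> length \<sigma>s = length ss \<and>
          ?t \<in> lang G (clos (Clo (Lam \<alpha>) \<sigma>) \<sigma>s))"
      then obtain \<alpha>2 \<sigma>2 \<sigma>s2 where "\<pi>2 = clos (Lam (Clo \<alpha>2 (Lift \<sigma>2))) \<sigma>s2" "length \<sigma>s2 = length ss"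
          "?t \<in> lang G (clos (Clo (Lam \<alpha>2) \<sigma>2) \<sigma>s2)" by blast
      then have "?t' \<in> lang G \<pi>2" using rel by simp
      then show "\<pi>2 = \<pi>" using uniq a2 \<pi>D \<pi>(2) by blast
    qed
  next
    assume "\<exists>!\<pi>. \<pi> \<in> Delta G n Pi \<and>
       (\<exists>\<alpha> \<sigma> \<sigma>s. \<pi> = clos (Lam (Clo \<alpha> (Lift \<sigma>))) \<sigma>s \<and> length \<sigma>s = length ss \<and>
          ?t \<in> lang G (clos (Clo (Lam \<alpha>) \<sigma>) \<sigma>s))"
    then obtain \<pi> \<alpha> \<sigma> \<sigma>s where p: "\<pi> \<in> Delta G n Pi" "\<pi> = clos (Lam (Clo \<alpha> (Lift \<sigma>))) \<sigma>s"
      "length \<sigma>s = length ss" "?t \<in> lang G (clos (Clo (Lam \<alpha>) \<sigma>) \<sigma>s)" by blast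
    then have tp: "?t' \<in> lang G \<pi>" using rel by simp
    obtain \<gamma> where g: "(NG n, \<gamma>) \<in> G" "\<pi> \<in> Pi \<gamma> (B \<gamma>)" using p(1) unfolding Delta_iff by blast
    have "?t' \<in> lang G \<gamma>" using in\<gamma>[OF g(2) g(1)] tp by blast
    then have "?t' \<in> lang G (Var (NG n))" using g(1) langI_Var by blast
    then show "norm_steps ?t (Suc n)" using t'n ns by simp
  qed
qed

end
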